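(* Let $a$ and $b$ be positive integers. There exists a graph $G$ with $\gamma^{LD}(G)=a$ and $\gamma^{SLD}(G)=b$ if and only if $0\le b-a\le 2^a-1$.
   Context: Graphs are finite, simple and undirected, and need not be connected. For a vertex $u$, $N(u)$ is its set of neighbours and $N[u]=N(u)\cup\{u\}$. A code is a non-empty subset $C$ of the vertex set $V$; $I(C;u)=N[u]\cap C$. A code $C$ is locating-dominating if for all distinct $u,v\in V\setminus C$ we have $I(C;u)\neq\emptyset$ and $I(C;u)\ne I(C;v)$. A code $C$ is self-locating-dominating if for every $u\in V\setminus C$ we have $I(C;u)\neq\emptyset$ and $\bigcap_{c\in I(C;u)}N[c]=\{u\}$. $\gamma^{LD}(G)$ and $\gamma^{SLD}(G)$ are the minimum sizes of a locating-dominating and a self-locating-dominating code in $G$. *)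

theory Defs
  imports Main
begin

definition is_graph :: "'a set \<Rightarrow> ('a \<Rightarrow> 'a \<Rightarrow> bool) \<Rightarrow> bool" where
  "is_graph V E \<longleftrightarrow> finite V \<and> (\<forall>u v. E u v \<longrightarrow> u \<in> V \<and> v \<in> V)
     \<and> (\<forall>u v. E u v \<longrightarrow> E v u) \<and> (\<forall>u. \<not> E u u)"

definition cnbhd :: "('a \<Rightarrow> 'a \<Rightarrow> bool) \<Rightarrow> 'a \<Rightarrow> 'a set" where
  "cnbhd E u = insert u {v. E u v}"

definition Icode :: "('a \<Rightarrow> 'a \<Rightarrow> bool) \<Rightarrow> 'a set \<Rightarrow> 'a \<Rightarrow> 'a set" where
  "Icode E C u = cnbhd E u \<inter> C"

definition is_code :: "'a set \<Rightarrow> 'a set \<Rightarrow> bool" where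
  "is_code V C \<longleftrightarrow> C \<noteq> {} \<and> C \<subseteq> V"

definition is_LD :: "'a set \<Rightarrow> ('a \<Rightarrow> 'a \<Rightarrow> bool) \<Rightarrow> 'a set \<Rightarrow> bool" where
  "is_LD V E C \<longleftrightarrow> is_code V C
     \<and> (\<forall>u \<in> V - C. Icode E C u \<noteq> {})
     \<and> (\<forall>u \<in> V - C. \<forall>v \<in> V - C. u \<noteq> v \<longrightarrow> Icode E C u \<noteq> Icode E C v)"

definition is_SLD :: "'a set \<Rightarrow> ('a \<Rightarrow> 'a \<Rightarrow> bool) \<Rightarrow> 'a set \<Rightarrow> bool" where
  "is_SLD V E C \<longleftrightarrow> is_code V C
     \<and> (\<forall>u \<in> V - C. Icode E C u \<noteq> {} \<and> (\<Inter>c \<in> Icode E C u. cnbhd E c) = {u})"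

definition gamma_LD :: "'a set \<Rightarrow> ('a \<Rightarrow> 'a \<Rightarrow> bool) \<Rightarrow> nat" where
  "gamma_LD V E = Min {card C | C. is_LD V E C}"

definition gamma_SLD :: "'a set \<Rightarrow> ('a \<Rightarrow> 'a \<Rightarrow> bool) \<Rightarrow> nat" where
  "gamma_SLD V E = Min {card C | C. is_SLD V E C}"

end

theory Submission
  imports Defs
begin


lemma graph_sym: "is_graph V E \<Longrightarrow> E u v \<Longrightarrow> E v u"
  unfolding is_graph_def by blast
lemma graph_in: "is_graph V E \<Longrightarrow> E u v \<Longrightarrow> u \<in> V \<and> v \<in> V"
  unfolding is_graph_def by blast
lemma graph_fin: "is_graph V E \<Longrightarrow> finite V"
  unfolding is_graph_def by blast

lemma LD_V: "is_graph V E \<Longrightarrow> V \<noteq> {} \<Longrightarrow> is_LD V E V"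
  unfolding is_LD_def is_code_def by auto
lemma SLD_V: "is_graph V E \<Longrightarrow> V \<noteq> {} \<Longrightarrow> is_SLD V E V"
  unfolding is_SLD_def is_code_def by auto

lemma SLD_LD: assumes g: "is_graph V E" and s: "is_SLD V E C" shows "is_LD V E C"
proof -
  have code: "is_code V C" and h: "\<forall>u \<in> V - C. Icode E C u \<noteq> {} \<and> (\<Inter>c \<in> Icode E C u. cnbhd E c) = {u}"
    using s unfolding is_SLD_def by auto
  have "Icode E C u \<noteq> Icode E C v" if u: "u \<in> V - C" and v: "v \<in> V - C" and uv: "u \<noteq> v" for u v
  proof
    assume eq: "Icode E C u = Icode E C v"
    have "v \<in> (\<Inter>c \<in> Icode E C u. cnbhd E c)"
    proof
      fix c assume "c \<in> Icode E C u"
      then have "c \<in> cnbhd E v" "c \<noteq> v" using eq v unfolding Icode_def by auto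
      then have "E v c" unfolding cnbhd_def by auto
      then have "E c v" using graph_sym[OF g] by blast
      then show "v \<in> cnbhd E c" unfolding cnbhd_def by auto
    qed
    moreover have "(\<Inter>c \<in> Icode E C u. cnbhd E c) = {u}" using h u by auto
    ultimately show False using uv by auto
  qed
  then show ?thesis using code h unfolding is_LD_def by blast
qed

lemma LD_count:
  assumes g: "is_graph V E" and d: "is_LD V E D" and HV: "H \<subseteq> V"
    and cl: "\<And>u v. u \<in> H \<Longrightarrow> E u v \<Longrightarrow> v \<in> H"
  shows "card H + 1 \<le> card (D \<inter> H) + 2 ^ card (D \<inter> H)"
proof -
  have fin: "finite V" using graph_fin[OF g] .
  have finH: "finite H" using fin HV finite_subset by blast
  have ne: "\<forall>u \<in> V - D. Icode E D u \<noteq> {}"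
    and dist: "\<forall>u \<in> V - D. \<forall>v \<in> V - D. u \<noteq> v \<longrightarrow> Icode E D u \<noteq> Icode E D v"
    using d unfolding is_LD_def by auto
  have inj: "inj_on (Icode E D) (H - D)"
    using dist HV unfolding inj_on_def by blast
  have sub: "Icode E D ` (H - D) \<subseteq> Pow (D \<inter> H) - {{}}"
  proof
    fix X assume "X \<in> Icode E D ` (H - D)"
    then obtain u where u: "u \<in> H - D" and X: "X = Icode E D u" by auto
    have "X \<noteq> {}" using ne u X HV by auto
    moreover have "X \<subseteq> D \<inter> H"
    proof
      fix c assume "c \<in> X"
      then have c: "c \<in> D" "c \<in> cnbhd E u" using X unfolding Icode_def by auto
      then have "c = u \<or> E u c" unfolding cnbhd_def by auto
      then have "c \<in> H" using u cl by auto
      then show "c \<in> D \<inter> H" using c by auto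
    qed
    ultimately show "X \<in> Pow (D \<inter> H) - {{}}" by auto
  qed
  have finDH: "finite (D \<inter> H)" using finH by auto
  have "card (H - D) \<le> card (Pow (D \<inter> H) - {{}})"
    by (rule card_inj_on_le[OF inj sub]) (use finDH in blast)
  also have "\<dots> = 2 ^ card (D \<inter> H) - 1"
    using finDH card_Pow[of "D \<inter> H"] by (subst card_Diff_singleton) (auto simp del: Pow_Int_eq)
  finally have a: "card (H - D) \<le> 2 ^ card (D \<inter> H) - 1" .
  have b: "card H = card (H - D) + card (D \<inter> H)"
    using finH by (metis Int_commute card_Diff_subset_Int card_Int_Diff add.commute)
  have "(1::nat) \<le> 2 ^ card (D \<inter> H)" by simp
  then show ?thesis using a b by linarith
qed



lemma gLD_props:
  assumes g: "is_graph V E" and ne: "V \<noteq> {}"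
  shows "\<exists>C. is_LD V E C \<and> card C = gamma_LD V E" "\<And>C. is_LD V E C \<Longrightarrow> gamma_LD V E \<le> card C"
proof -
  let ?S = "{card C | C. is_LD V E C}"
  have fin: "finite ?S"
  proof (rule finite_subset[of _ "{0..card V}"])
    show "?S \<subseteq> {0..card V}"
    proof
      fix x assume "x \<in> ?S"
      then obtain C where "is_LD V E C" "x = card C" by auto
      then show "x \<in> {0..card V}" using graph_fin[OF g] unfolding is_LD_def is_code_def
        by (auto intro: card_mono)
    qed
  qed auto
  have nem: "?S \<noteq> {}" using LD_V[OF g ne] by auto
  show "\<exists>C. is_LD V E C \<and> card C = gamma_LD V E"
    using Min_in[OF fin nem] unfolding gamma_LD_def by auto
  show "\<And>C. is_LD V E C \<Longrightarrow> gamma_LD V E \<le> card C"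
    using Min_le[OF fin] unfolding gamma_LD_def by auto
qed

lemma gSLD_props:
  assumes g: "is_graph V E" and ne: "V \<noteq> {}"
  shows "\<exists>C. is_SLD V E C \<and> card C = gamma_SLD V E" "\<And>C. is_SLD V E C \<Longrightarrow> gamma_SLD V E \<le> card C"
proof -
  let ?S = "{card C | C. is_SLD V E C}"
  have fin: "finite ?S"
  proof (rule finite_subset[of _ "{0..card V}"])
    show "?S \<subseteq> {0..card V}"
    proof
      fix x assume "x \<in> ?S"
      then obtain C where "is_SLD V E C" "x = card C" by auto
      then show "x \<in> {0..card V}" using graph_fin[OF g] unfolding is_SLD_def is_code_def
        by (auto intro: card_mono)
    qed
  qed auto
  have nem: "?S \<noteq> {}" using SLD_V[OF g ne] by auto
  show "\<exists>C. is_SLD V E C \<and> card C = gamma_SLD V E"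
    using Min_in[OF fin nem] unfolding gamma_SLD_def by auto
  show "\<And>C. is_SLD V E C \<Longrightarrow> gamma_SLD V E \<le> card C"
    using Min_le[OF fin] unfolding gamma_SLD_def by auto
qed

lemma forward:
  assumes g: "is_graph V E" and ne: "V \<noteq> {}"
  shows "gamma_LD V E \<le> gamma_SLD V E \<and> gamma_SLD V E + 1 \<le> gamma_LD V E + 2 ^ gamma_LD V E"
proof -
  obtain C where C: "is_LD V E C" "card C = gamma_LD V E" using gLD_props(1)[OF g ne] by blast
  obtain D where D: "is_SLD V E D" "card D = gamma_SLD V E" using gSLD_props(1)[OF g ne] by blast
  have 1: "gamma_LD V E \<le> gamma_SLD V E" using gLD_props(2)[OF g ne SLD_LD[OF g D(1)]] D(2) by simp
  have "gamma_SLD V E \<le> card V" using gSLD_props(2)[OF g ne SLD_V[OF g ne]] .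
  moreover have "card V + 1 \<le> card (C \<inter> V) + 2 ^ card (C \<inter> V)"
    using LD_count[OF g C(1), of V] graph_in[OF g] by blast
  moreover have "C \<inter> V = C" using C(1) unfolding is_LD_def is_code_def by auto
  ultimately show ?thesis using 1 C(2) by auto
qed

lemma SLD_forced:
  assumes g: "is_graph V E" and s: "is_SLD V E D"
    and dom: "\<And>u. u \<in> V \<Longrightarrow> {v. E u v} = {} \<or> (\<exists>w \<in> V. w \<noteq> u \<and> {v. E u v} \<subseteq> cnbhd E w)"
  shows "D = V"
proof (rule ccontr)
  assume "D \<noteq> V"
  then obtain u where u: "u \<in> V" "u \<notin> D" using s unfolding is_SLD_def is_code_def by blast
  have h: "Icode E D u \<noteq> {}" "(\<Inter>c \<in> Icode E D u. cnbhd E c) = {u}" using s u unfolding is_SLD_def by auto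
  have sub: "Icode E D u \<subseteq> {v. E u v}" using u unfolding Icode_def cnbhd_def by auto
  then have "{v. E u v} \<noteq> {}" using h(1) by blast
  then obtain w where w: "w \<in> V" "w \<noteq> u" "{v. E u v} \<subseteq> cnbhd E w" using dom[OF u(1)] by blast
  have "w \<in> (\<Inter>c \<in> Icode E D u. cnbhd E c)"
  proof
    fix c assume "c \<in> Icode E D u"
    then have "c \<in> cnbhd E w" using sub w by blast
    then have "c = w \<or> E c w" unfolding cnbhd_def using graph_sym[OF g] by auto
    then show "w \<in> cnbhd E c" unfolding cnbhd_def by auto
  qed
  then show False using h(2) w(2) by auto
qed

lemma gSLD_all:
  assumes g: "is_graph V E" and ne: "V \<noteq> {}"
    and dom: "\<And>u. u \<in> V \<Longrightarrow> {v. E u v} = {} \<or> (\<exists>w \<in> V. w \<noteq> u \<and> {v. E u v} \<subseteq> cnbhd E w)"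
  shows "gamma_SLD V E = card V"
proof -
  obtain C where C: "is_SLD V E C" "card C = gamma_SLD V E" using gSLD_props(1)[OF g ne] by blast
  have "C = V" using SLD_forced[OF g C(1) dom] .
  then show ?thesis using C(2) by simp
qed

lemma LD_lower:
  assumes g: "is_graph V E" and d: "is_LD V E D" and HV: "H \<subseteq> V"
    and cl: "\<And>u v. E u v \<Longrightarrow> u \<in> H"
    and cardH: "card H = j + k" and jk: "j \<ge> 1 \<Longrightarrow> 2 ^ (j - 1) \<le> k"
  shows "card (V - H) + j \<le> card D"
proof -
  have fin: "finite V" using graph_fin[OF g] .
  have DV: "D \<subseteq> V" using d unfolding is_LD_def is_code_def by auto
  have iso: "V - H \<subseteq> D"
  proof
    fix u assume u: "u \<in> V - H"
    have "Icode E D u \<noteq> {}" if "u \<notin> D" using d u that unfolding is_LD_def by auto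
    moreover have "Icode E D u \<subseteq> {u}" using u cl unfolding Icode_def cnbhd_def by auto
    ultimately show "u \<in> D" unfolding Icode_def by auto
  qed
  have cl2: "\<And>u v. u \<in> H \<Longrightarrow> E u v \<Longrightarrow> v \<in> H" using cl graph_sym[OF g] by blast
  have cnt: "card H + 1 \<le> card (D \<inter> H) + 2 ^ card (D \<inter> H)" using LD_count[OF g d HV cl2] .
  have mj: "j \<le> card (D \<inter> H)"
  proof (rule ccontr)
    assume "\<not> ?thesis"
    then have m: "card (D \<inter> H) \<le> j - 1" "j \<ge> 1" by auto
    have "(2::nat) ^ card (D \<inter> H) \<le> 2 ^ (j - 1)" using m(1) by (simp add: power_increasing)
    then show False using cnt m jk cardH by linarith
  qed
  have "D = (V - H) \<union> (D \<inter> H)" using iso DV by blast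
  then have "card D = card (V - H) + card (D \<inter> H)"
  proof -
    have "finite (V - H)" "finite (D \<inter> H)" using fin DV finite_subset by auto
    moreover have "(V - H) \<inter> (D \<inter> H) = {}" by blast
    ultimately show ?thesis using \<open>D = (V - H) \<union> (D \<inter> H)\<close> card_Un_disjoint by metis
  qed
  then show ?thesis using mj by linarith
qed



fun cE :: "nat \<Rightarrow> nat set set \<Rightarrow> nat + nat set \<Rightarrow> nat + nat set \<Rightarrow> bool" where
  "cE j F (Inl i) (Inl i') = (i < j \<and> i' < j \<and> i \<noteq> i')"
| "cE j F (Inl i) (Inr T) = (T \<in> F \<and> i \<in> T)"
| "cE j F (Inr T) (Inl i) = (T \<in> F \<and> i \<in> T)"
| "cE j F (Inr S) (Inr T) = (S \<in> F \<and> T \<in> F \<and> S \<noteq> T \<and> S \<union> T = {0..<j}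
      \<and> (S = {0..<j} \<longrightarrow> 0 \<in> T) \<and> (T = {0..<j} \<longrightarrow> 0 \<in> S))"

definition cV :: "nat \<Rightarrow> nat \<Rightarrow> nat set set \<Rightarrow> (nat + nat set) set" where
  "cV j s F = Inl ` {0..<j+s} \<union> Inr ` F"

definition cH :: "nat \<Rightarrow> nat set set \<Rightarrow> (nat + nat set) set" where
  "cH j F = Inl ` {0..<j} \<union> Inr ` F"

locale cons =
  fixes j s :: nat and F :: "nat set set"
  assumes FP: "F \<subseteq> Pow {0..<j} - {{}}"
    and FR: "j \<ge> 1 \<Longrightarrow> {0..<j} \<in> F \<and> (\<forall>c \<in> {1..<j}. {0..<j} - {c} \<in> F)"
begin

lemma FT: "T \<in> F \<Longrightarrow> T \<subseteq> {0..<j} \<and> T \<noteq> {}" using FP by auto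

lemma FTi: "T \<in> F \<Longrightarrow> i \<in> T \<Longrightarrow> i < j" using FT by fastforce

lemma FC: "j \<ge> 1 \<Longrightarrow> {0..<j} \<in> F" using FR by blast
lemma FCc: "c \<in> {1..<j} \<Longrightarrow> {0..<j} - {c} \<in> F" using FR by force

lemma finF: "finite F"
  using FP finite_subset by (metis Diff_subset finite_Pow_iff finite_atLeastLessThan subset_trans)

lemma inH: "cE j F u v \<Longrightarrow> u \<in> cH j F \<and> v \<in> cH j F"
  using FT by (cases u; cases v) (auto simp: cH_def)

lemma graph: "is_graph (cV j s F) (cE j F)"
proof -
  have "finite (cV j s F)" using finF by (simp add: cV_def)
  moreover have "\<forall>u v. cE j F u v \<longrightarrow> u \<in> cV j s F \<and> v \<in> cV j s F"
    using inH unfolding cH_def cV_def by fastforce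
  moreover have "\<forall>u v. cE j F u v \<longrightarrow> cE j F v u"
    by (intro allI; case_tac u; case_tac v) auto
  moreover have "\<forall>u. \<not> cE j F u u" by (intro allI; case_tac u) auto
  ultimately show ?thesis unfolding is_graph_def by blast
qed

lemma cardH: "card (cH j F) = j + card F"
  unfolding cH_def using finF
  by (subst card_Un_disjoint) (auto simp: card_image)

lemma HV: "cH j F \<subseteq> cV j s F" unfolding cH_def cV_def by auto

lemma VH: "cV j s F - cH j F = Inl ` {j..<j+s}" unfolding cH_def cV_def by (auto simp: image_iff not_less)

lemma cardVH: "card (cV j s F - cH j F) = s" unfolding VH by (simp add: card_image)

lemma cardV: "card (cV j s F) = j + s + card F"
  unfolding cV_def using finF
  by (subst card_Un_disjoint) (auto simp: card_image)

lemma LD0: assumes "j + s \<ge> 1" shows "is_LD (cV j s F) (cE j F) (Inl ` {0..<j+s})"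
proof -
  have ic: "Icode (cE j F) (Inl ` {0..<j+s}) (Inr T) = Inl ` T" if "T \<in> F" for T
    using that FTi[of T] unfolding Icode_def cnbhd_def by (auto simp: image_iff trans_less_add1)
  have code: "is_code (cV j s F) (Inl ` {0..<j+s})" using assms unfolding is_code_def cV_def by auto
  have "\<forall>u \<in> cV j s F - Inl ` {0..<j+s}. Icode (cE j F) (Inl ` {0..<j+s}) u \<noteq> {}"
    using ic FT unfolding cV_def by auto
  moreover have "\<forall>u \<in> cV j s F - Inl ` {0..<j+s}. \<forall>v \<in> cV j s F - Inl ` {0..<j+s}. u \<noteq> v \<longrightarrow>
     Icode (cE j F) (Inl ` {0..<j+s}) u \<noteq> Icode (cE j F) (Inl ` {0..<j+s}) v"
  proof (intro ballI impI)
    fix u v assume u: "u \<in> cV j s F - Inl ` {0..<j+s}" and v: "v \<in> cV j s F - Inl ` {0..<j+s}" and uv: "u \<noteq> v"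
    obtain T where T: "T \<in> F" "u = Inr T" using u unfolding cV_def by auto
    obtain S where S: "S \<in> F" "v = Inr S" using v unfolding cV_def by auto
    have "T \<noteq> S" using T S uv by auto
    then have "Inl ` T \<noteq> (Inl ` S :: (nat + nat set) set)" by (metis inj_Inl inj_image_eq_iff)
    then show "Icode (cE j F) (Inl ` {0..<j+s}) u \<noteq> Icode (cE j F) (Inl ` {0..<j+s}) v"
      using ic T S by simp
  qed
  ultimately show ?thesis using code unfolding is_LD_def by blast
qed

lemma mem_cn: "v \<in> cnbhd E w \<longleftrightarrow> v = w \<or> E w v" unfolding cnbhd_def by auto

lemma dom:
  assumes u: "u \<in> cV j s F"
  shows "{v. cE j F u v} = {} \<or> (\<exists>w \<in> cV j s F. w \<noteq> u \<and> {v. cE j F u v} \<subseteq> cnbhd (cE j F) w)"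
proof (cases u)
  case (Inl i)
  show ?thesis
  proof (cases "i < j")
    case False
    have "\<not> cE j F (Inl i) v" for v using False FTi by (cases v) auto
    then have "{v. cE j F u v} = {}" using Inl by simp
    then show ?thesis by blast
  next
    case True
    then have j1: "j \<ge> 1" by simp
    show ?thesis
    proof (cases "i = 0")
      case True
      have w: "Inr {0..<j} \<in> cV j s F" using FC[OF j1] unfolding cV_def by simp
      have "cE j F (Inr {0..<j}) v" if e: "cE j F (Inl 0) v" "v \<noteq> Inr {0..<j}" for v
      proof (cases v)
        case (Inl i') then show ?thesis using e FC[OF j1] by simp
      next
        case (Inr T)
        have T: "T \<subseteq> {0..<j}" "T \<in> F" "0 \<in> T" using e Inr FT[of T] by simp_all
        have "T \<noteq> {0..<j}" using e(2) Inr by simp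
        moreover have "{0..<j} \<union> T = {0..<j}" using T by blast
        ultimately show ?thesis using T Inr FC[OF j1] by auto
      qed
      then have "{v. cE j F u v} \<subseteq> cnbhd (cE j F) (Inr {0..<j})" using Inl True unfolding mem_cn subset_iff mem_Collect_eq by metis
      then show ?thesis using w Inl by blast
    next
      case False
      have c: "i \<in> {1..<j}" using False \<open>i < j\<close> by simp
      have w: "Inr ({0..<j} - {i}) \<in> cV j s F" using FCc[OF c] unfolding cV_def by simp
      have "cE j F (Inr ({0..<j} - {i})) v" if e: "cE j F (Inl i) v" "v \<noteq> Inr ({0..<j} - {i})" for v
      proof (cases v)
        case (Inl i') then show ?thesis using e FCc[OF c] by simp
      next
        case (Inr T)
        have T: "T \<subseteq> {0..<j}" "i \<in> T" "T \<in> F" using e Inr FT[of T] by simp_all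
        have 1: "T \<noteq> {0..<j} - {i}" using T by blast
        have 2: "({0..<j} - {i}) \<union> T = {0..<j}" using T by blast
        have 3: "({0..<j} - {i}) \<noteq> {0..<j}" using c by (auto simp: set_eq_iff)
        have 4: "0 \<in> {0..<j} - {i}" using c by simp
        show ?thesis using T 1 2 3 4 Inr FCc[OF c] by simp
      qed
      then have "{v. cE j F u v} \<subseteq> cnbhd (cE j F) (Inr ({0..<j} - {i}))" using Inl unfolding mem_cn subset_iff mem_Collect_eq by metis
      then show ?thesis using w Inl by blast
    qed
  qed
next
  case (Inr T)
  have TF: "T \<in> F" using u Inr unfolding cV_def by auto
  have T: "T \<subseteq> {0..<j}" "T \<noteq> {}" using FT[OF TF] by simp_all
  then have j1: "j \<ge> 1" by (cases j) auto
  show ?thesis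
  proof (cases "T = {0..<j}")
    case True
    have w: "Inl 0 \<in> cV j s F" using j1 unfolding cV_def by simp
    have "cE j F (Inl 0) v" if e: "cE j F (Inr {0..<j}) v" "v \<noteq> Inl 0" for v
    proof (cases v)
      case (Inl i') then show ?thesis using e j1 FC[OF j1] by simp
    next
      case (Inr S) then show ?thesis using e by simp
    qed
    then have "{v. cE j F u v} \<subseteq> cnbhd (cE j F) (Inl 0)" using Inr True unfolding mem_cn subset_iff mem_Collect_eq by metis
    then show ?thesis using w Inr by blast
  next
    case False
    then obtain c where c: "c \<in> {0..<j}" "c \<notin> T" using T by blast
    have w: "Inl c \<in> cV j s F" using c unfolding cV_def by simp
    have "cE j F (Inl c) v" if e: "cE j F (Inr T) v" "v \<noteq> Inl c" for v
    proof (cases v)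
      case (Inl i') then show ?thesis using e c T by auto
    next
      case (Inr S)
      have "T \<union> S = {0..<j}" "S \<in> F" using e Inr by simp_all
      then have "c \<in> S" using c by blast
      then show ?thesis using \<open>S \<in> F\<close> Inr by simp
    qed
    then have "{v. cE j F u v} \<subseteq> cnbhd (cE j F) (Inl c)" using Inr unfolding mem_cn subset_iff mem_Collect_eq by metis
    then show ?thesis using w Inr c by auto
  qed
qed

lemma gammas:
  assumes ne: "j + s \<ge> 1" and jk: "j \<ge> 1 \<Longrightarrow> 2 ^ (j - 1) \<le> card F"
  shows "gamma_LD (cV j s F) (cE j F) = j + s" "gamma_SLD (cV j s F) (cE j F) = j + s + card F"
proof -
  have Vne: "cV j s F \<noteq> {}" using ne unfolding cV_def by auto
  show "gamma_SLD (cV j s F) (cE j F) = j + s + card F"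
    using gSLD_all[OF graph Vne dom] cardV by simp
  have "j + s \<le> card D" if "is_LD (cV j s F) (cE j F) D" for D
    using LD_lower[OF graph that HV _ cardH jk] inH cardVH by simp
  moreover have "card (Inl ` {0..<j+s} :: (nat + nat set) set) = j + s" by (simp add: card_image)
  ultimately show "gamma_LD (cV j s F) (cE j F) = j + s"
    using gLD_props[OF graph Vne] LD0[OF ne] by (metis order_antisym)
qed

end



locale transl =
  fixes V :: "'a set" and E :: "'a \<Rightarrow> 'a \<Rightarrow> bool" and f :: "'a \<Rightarrow> nat"
  assumes g: "is_graph V E" and inj: "inj_on f V"
begin

definition E' :: "nat \<Rightarrow> nat \<Rightarrow> bool" where
  "E' x y = (\<exists>u\<in>V. \<exists>v\<in>V. x = f u \<and> y = f v \<and> E u v)"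

lemma graph': "is_graph (f ` V) E'"
proof -
  have "finite (f ` V)" using graph_fin[OF g] by simp
  moreover have "\<forall>x y. E' x y \<longrightarrow> x \<in> f ` V \<and> y \<in> f ` V" unfolding E'_def by blast
  moreover have "\<forall>x y. E' x y \<longrightarrow> E' y x" unfolding E'_def using graph_sym[OF g] by blast
  moreover have "\<forall>x. \<not> E' x x"
  proof (intro allI notI)
    fix x assume "E' x x"
    then obtain u v where "u \<in> V" "v \<in> V" "f u = f v" "E u v" unfolding E'_def by blast
    then have "u = v" "E u v" using inj unfolding inj_on_def by auto
    then show False using g unfolding is_graph_def by blast
  qed
  ultimately show ?thesis unfolding is_graph_def by blast
qed

lemma cnV: "u \<in> V \<Longrightarrow> cnbhd E u \<subseteq> V"
  unfolding cnbhd_def using graph_in[OF g] by auto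

lemma cn': assumes u: "u \<in> V" shows "cnbhd E' (f u) = f ` cnbhd E u"
proof
  show "cnbhd E' (f u) \<subseteq> f ` cnbhd E u"
  proof
    fix x assume "x \<in> cnbhd E' (f u)"
    then have "x = f u \<or> E' (f u) x" unfolding cnbhd_def by auto
    then show "x \<in> f ` cnbhd E u"
    proof
      assume "E' (f u) x"
      then obtain u' v where uv: "u' \<in> V" "v \<in> V" "f u = f u'" "x = f v" "E u' v" unfolding E'_def by blast
      then have "u = u'" using inj u unfolding inj_on_def by auto
      then show ?thesis using uv unfolding cnbhd_def by auto
    qed (auto simp: cnbhd_def)
  qed
  show "f ` cnbhd E u \<subseteq> cnbhd E' (f u)"
    using u graph_in[OF g] unfolding cnbhd_def E'_def by auto
qed

lemma ic': assumes u: "u \<in> V" and C: "C \<subseteq> V"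
  shows "Icode E' (f ` C) (f u) = f ` Icode E C u"
  unfolding Icode_def cn'[OF u] using inj_on_image_Int[OF inj cnV[OF u] C] by simp

lemma LD_iff: assumes C: "C \<subseteq> V" shows "is_LD (f ` V) E' (f ` C) \<longleftrightarrow> is_LD V E C"
proof -
  have code: "is_code (f ` V) (f ` C) \<longleftrightarrow> is_code V C" using C unfolding is_code_def by auto
  have dif: "f ` V - f ` C = f ` (V - C)" using inj_on_image_set_diff[OF inj _ C] by simp
  have a: "(\<forall>x \<in> f ` V - f ` C. Icode E' (f ` C) x \<noteq> {}) \<longleftrightarrow> (\<forall>u \<in> V - C. Icode E C u \<noteq> {})"
    unfolding dif using ic' C by auto
  have b: "(\<forall>x \<in> f ` V - f ` C. \<forall>y \<in> f ` V - f ` C. x \<noteq> y \<longrightarrow> Icode E' (f ` C) x \<noteq> Icode E' (f ` C) y)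
     \<longleftrightarrow> (\<forall>u \<in> V - C. \<forall>v \<in> V - C. u \<noteq> v \<longrightarrow> Icode E C u \<noteq> Icode E C v)"
  proof -
    have "(f ` Icode E C u = f ` Icode E C v) \<longleftrightarrow> Icode E C u = Icode E C v" if "u \<in> V" "v \<in> V" for u v
      using inj_on_image_eq_iff[OF inj] that by (metis Icode_def cnV inf.coboundedI1)
    moreover have "f u = f v \<longleftrightarrow> u = v" if "u \<in> V" "v \<in> V" for u v
      using inj that unfolding inj_on_def by auto
    ultimately show ?thesis unfolding dif using ic' C by auto
  qed
  show ?thesis unfolding is_LD_def using code a b by blast
qed

lemma SLD_iff: assumes C: "C \<subseteq> V" shows "is_SLD (f ` V) E' (f ` C) \<longleftrightarrow> is_SLD V E C"
proof -
  have code: "is_code (f ` V) (f ` C) \<longleftrightarrow> is_code V C" using C unfolding is_code_def by auto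
  have dif: "f ` V - f ` C = f ` (V - C)" using inj_on_image_set_diff[OF inj _ C] by simp
  have key: "(Icode E' (f ` C) (f u) \<noteq> {} \<and> (\<Inter>c \<in> Icode E' (f ` C) (f u). cnbhd E' c) = {f u})
      \<longleftrightarrow> (Icode E C u \<noteq> {} \<and> (\<Inter>c \<in> Icode E C u. cnbhd E c) = {u})" if u: "u \<in> V" for u
  proof (cases "Icode E C u = {}")
    case True then show ?thesis using ic'[OF u C] by simp
  next
    case False
    have IV: "Icode E C u \<subseteq> V" using cnV[OF u] unfolding Icode_def by auto
    have "(\<Inter>c \<in> Icode E' (f ` C) (f u). cnbhd E' c) = (\<Inter>c \<in> Icode E C u. cnbhd E' (f c))"
      unfolding ic'[OF u C] by (simp add: image_image)
    also have "\<dots> = (\<Inter>c \<in> Icode E C u. f ` cnbhd E c)" using cn' IV by (intro INF_cong) auto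
    also have "\<dots> = f ` (\<Inter>c \<in> Icode E C u. cnbhd E c)"
      using False image_INT[OF inj, of "Icode E C u" "cnbhd E"] cnV IV by blast
    finally have eq: "(\<Inter>c \<in> Icode E' (f ` C) (f u). cnbhd E' c) = f ` (\<Inter>c \<in> Icode E C u. cnbhd E c)" .
    obtain c0 where c0: "c0 \<in> Icode E C u" using False by blast
    have sub: "(\<Inter>c \<in> Icode E C u. cnbhd E c) \<subseteq> V" using c0 cnV IV by blast
    have "f ` (\<Inter>c \<in> Icode E C u. cnbhd E c) = {f u} \<longleftrightarrow> (\<Inter>c \<in> Icode E C u. cnbhd E c) = {u}"
    proof -
      have "f ` X = f ` {u} \<longleftrightarrow> X = {u}" if "X \<subseteq> V" for X
        using inj_on_image_eq_iff[OF inj that, of "{u}"] u by simp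
      then show ?thesis using sub by simp
    qed
    then show ?thesis using eq False ic'[OF u C] by simp
  qed
  have "(\<forall>x \<in> f ` V - f ` C. Icode E' (f ` C) x \<noteq> {} \<and> (\<Inter>c \<in> Icode E' (f ` C) x. cnbhd E' c) = {x})
     \<longleftrightarrow> (\<forall>u \<in> V - C. Icode E C u \<noteq> {} \<and> (\<Inter>c \<in> Icode E C u. cnbhd E c) = {u})"
    unfolding dif using key by auto
  then show ?thesis unfolding is_SLD_def using code by blast
qed

lemma cards_LD: "{card C | C. is_LD (f ` V) E' C} = {card C | C. is_LD V E C}"
proof (intro set_eqI iffI)
  fix n assume "n \<in> {card C | C. is_LD (f ` V) E' C}"
  then obtain C' where C': "is_LD (f ` V) E' C'" "n = card C'" by blast
  have sub: "C' \<subseteq> f ` V" using C' unfolding is_LD_def is_code_def by auto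
  define C where "C = V \<inter> f -` C'"
  have CV: "C \<subseteq> V" and fC: "f ` C = C'" using sub unfolding C_def by auto
  have "card C' = card C" using fC card_image inj CV by (metis inj_on_subset)
  moreover have "is_LD V E C" using LD_iff[OF CV] C' fC by simp
  ultimately show "n \<in> {card C | C. is_LD V E C}" using C' by auto
next
  fix n assume "n \<in> {card C | C. is_LD V E C}"
  then obtain C where C: "is_LD V E C" "n = card C" by blast
  have CV: "C \<subseteq> V" using C unfolding is_LD_def is_code_def by auto
  have "card (f ` C) = card C" using card_image inj CV by (metis inj_on_subset)
  then show "n \<in> {card C | C. is_LD (f ` V) E' C}" using LD_iff[OF CV] C by (metis (mono_tags, lifting) mem_Collect_eq)
qed

lemma cards_SLD: "{card C | C. is_SLD (f ` V) E' C} = {card C | C. is_SLD V E C}"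
proof (intro set_eqI iffI)
  fix n assume "n \<in> {card C | C. is_SLD (f ` V) E' C}"
  then obtain C' where C': "is_SLD (f ` V) E' C'" "n = card C'" by blast
  have sub: "C' \<subseteq> f ` V" using C' unfolding is_SLD_def is_code_def by auto
  define C where "C = V \<inter> f -` C'"
  have CV: "C \<subseteq> V" and fC: "f ` C = C'" using sub unfolding C_def by auto
  have "card C' = card C" using fC card_image inj CV by (metis inj_on_subset)
  moreover have "is_SLD V E C" using SLD_iff[OF CV] C' fC by simp
  ultimately show "n \<in> {card C | C. is_SLD V E C}" using C' by auto
next
  fix n assume "n \<in> {card C | C. is_SLD V E C}"
  then obtain C where C: "is_SLD V E C" "n = card C" by blast
  have CV: "C \<subseteq> V" using C unfolding is_SLD_def is_code_def by auto
  have "card (f ` C) = card C" using card_image inj CV by (metis inj_on_subset)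
  then show "n \<in> {card C | C. is_SLD (f ` V) E' C}" using SLD_iff[OF CV] C by (metis (mono_tags, lifting) mem_Collect_eq)
qed

lemma result: "is_graph (f ` V) E' \<and> gamma_LD (f ` V) E' = gamma_LD V E \<and> gamma_SLD (f ` V) E' = gamma_SLD V E"
  using graph' cards_LD cards_SLD unfolding gamma_LD_def gamma_SLD_def by simp

end



lemma exF:
  assumes j1: "j \<ge> 1" and jk: "j \<le> k" and k: "k \<le> 2 ^ j - 1"
  shows "\<exists>F. cons j F \<and> card F = k"
proof -
  define C where "C = {0..<j::nat}"
  define P where "P = Pow C - {{}}"
  define R where "R = insert C ((\<lambda>c. C - {c}) ` {1..<j})"
  have finP: "finite P" unfolding P_def C_def by simp
  have RP: "R \<subseteq> P"
  proof -
    have "C \<in> P" unfolding P_def C_def using j1 by auto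
    moreover have "C - {c} \<in> P" if "c \<in> {1..<j}" for c
    proof -
      have "0 \<in> C - {c}" using that j1 unfolding C_def by auto
      then show ?thesis unfolding P_def by auto
    qed
    ultimately show ?thesis unfolding R_def by auto
  qed
  have cR: "card R \<le> j"
  proof -
    have "card R \<le> Suc (card ((\<lambda>c. C - {c}) ` {1..<j}))" unfolding R_def by (rule card_insert_le_m1) auto
    also have "\<dots> \<le> Suc (card {1..<j})" using card_image_le[of "{1..<j}" "\<lambda>c. C - {c}"] by simp
    finally show ?thesis using j1 by simp
  qed
  have cP: "card P = 2 ^ j - 1" unfolding P_def C_def
    using card_Pow[of "{0..<j}"] by (subst card_Diff_singleton) auto
  have "k - card R \<le> card (P - R)" using cP k RP finP by (simp add: card_Diff_subset finite_subset)
  then obtain G where G: "G \<subseteq> P - R" "card G = k - card R" "finite G" by (rule obtain_subset_with_card_n)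
  define F where "F = R \<union> G"
  have finR: "finite R" using RP finP finite_subset by blast
  have cF: "card F = k" unfolding F_def using G finR cR jk by (subst card_Un_disjoint) auto
  have "cons j F"
  proof
    show "F \<subseteq> Pow {0..<j} - {{}}" using RP G unfolding F_def P_def C_def by auto
    show "j \<ge> 1 \<Longrightarrow> {0..<j} \<in> F \<and> (\<forall>c \<in> {1..<j}. {0..<j} - {c} \<in> F)"
      unfolding F_def R_def C_def by auto
  qed
  then show ?thesis using cF by blast
qed



lemma choose_j:
  assumes k1: "k \<ge> 1" and ka: "k < 2 ^ a"
  shows "\<exists>j. 1 \<le> j \<and> j \<le> a \<and> k < 2 ^ j \<and> 2 ^ (j - 1) \<le> (k::nat)"
proof -
  define j where "j = (LEAST j. k < (2::nat) ^ j)"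
  have 1: "k < 2 ^ j" unfolding j_def using ka by (rule LeastI)
  have 2: "j \<le> a" unfolding j_def using ka by (rule Least_le)
  have 3: "j \<ge> 1" using 1 k1 by (cases j) auto
  have "\<not> k < 2 ^ (j - 1)" using not_less_Least[of "j - 1" "\<lambda>j. k < 2 ^ j"] 3 unfolding j_def by simp
  then show ?thesis using 1 2 3 by auto
qed

lemma construct:
  assumes a1: "a \<ge> 1" and ka: "k < 2 ^ a"
  shows "\<exists>(V :: nat set) E. is_graph V E \<and> V \<noteq> {} \<and> gamma_LD V E = a \<and> gamma_SLD V E = a + k"
proof -
  have "\<exists>j F. cons j F \<and> j \<le> a \<and> card F = k \<and> (j \<ge> 1 \<longrightarrow> 2 ^ (j - 1) \<le> card F)"
  proof (cases "k = 0")
    case True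
    have "cons 0 {}" by unfold_locales auto
    then show ?thesis using True by fastforce
  next
    case False
    then obtain j where j: "1 \<le> j" "j \<le> a" "k < 2 ^ j" "2 ^ (j - 1) \<le> k" using choose_j[OF _ ka] by auto
    have "j - 1 < 2 ^ (j - 1)" by (rule less_exp)
    then have jk: "j \<le> k" using j by linarith
    obtain F where F: "cons j F" "card F = k" using exF[OF j(1) jk] j(3) by fastforce
    then show ?thesis using j by blast
  qed
  then obtain j F where F: "cons j F" "j \<le> a" "card F = k" "j \<ge> 1 \<Longrightarrow> 2 ^ (j - 1) \<le> card F" by blast
  define s where "s = a - j"
  interpret cons j s F by (rule F(1))
  have js: "j + s = a" using F(2) unfolding s_def by simp
  have gl: "gamma_LD (cV j s F) (cE j F) = a" and gs: "gamma_SLD (cV j s F) (cE j F) = a + k"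
    using gammas F(3,4) js a1 by auto
  obtain f :: "nat + nat set \<Rightarrow> nat" and n where f: "f ` cV j s F = {i. i < n}" "inj_on f (cV j s F)"
    using finite_imp_inj_to_nat_seg[OF graph_fin[OF graph]] by blast
  interpret transl "cV j s F" "cE j F" f using graph f(2) by unfold_locales
  have ne: "cV j s F \<noteq> {}" using js a1 unfolding cV_def by auto
  have "f ` cV j s F \<noteq> {}" using ne by simp
  then show ?thesis using result gl gs by metis
qed



theorem mainTheorem19:
  fixes a b :: nat
  assumes "0 < a" and "0 < b"
  shows "(\<exists>(V :: nat set) E. is_graph V E \<and> V \<noteq> {} \<and>
            gamma_LD V E = a \<and> gamma_SLD V E = b)
         \<longleftrightarrow> (0 \<le> int b - int a \<and> int b - int a \<le> 2 ^ a - 1)"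
proof
  assume "\<exists>(V :: nat set) E. is_graph V E \<and> V \<noteq> {} \<and> gamma_LD V E = a \<and> gamma_SLD V E = b"
  then obtain V :: "nat set" and E where g: "is_graph V E" "V \<noteq> {}" "gamma_LD V E = a" "gamma_SLD V E = b" by blast
  have h: "a \<le> b" "b + 1 \<le> a + 2 ^ a" using forward[OF g(1,2)] g(3,4) by auto
  have "int (b + 1) \<le> int (a + 2 ^ a)" using h(2) by linarith
  then have "int b + 1 \<le> int a + 2 ^ a" by simp
  then show "0 \<le> int b - int a \<and> int b - int a \<le> 2 ^ a - 1" using h(1) by simp
next
  assume h: "0 \<le> int b - int a \<and> int b - int a \<le> 2 ^ a - 1"
  then have ab: "a \<le> b" by simp
  have "int b + 1 \<le> int a + 2 ^ a" using h by simp
  then have "int (b + 1) \<le> int (a + 2 ^ a)" by simp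
  then have "b + 1 \<le> a + 2 ^ a" by linarith
  then have k: "b - a < 2 ^ a" using ab by linarith
  obtain V :: "nat set" and E where "is_graph V E" "V \<noteq> {}" "gamma_LD V E = a" "gamma_SLD V E = a + (b - a)"
    using construct[OF _ k] assms(1) by (metis One_nat_def Suc_leI)
  then show "\<exists>(V :: nat set) E. is_graph V E \<and> V \<noteq> {} \<and> gamma_LD V E = a \<and> gamma_SLD V E = b"
    using ab by auto
qed


end
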